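(* Let $(M,d)$ be a separable metric space, $(\Omega,\mathscr{F},\mathbb{P},\theta)$ an ergodic measure-preserving dynamical system, and $\{f_\omega\}_{\omega\in\Omega}$ a family of paracontraction maps $f_\omega\colon M\to M$ with $(\omega,x)\mapsto f_\omega(x)$ measurable, and let $\varphi(n,\omega,x)=f_{\theta^{n-1}(\omega)}\circ\cdots\circ f_\omega(x)$. Let $C_\varphi=\{x\in M\colon \mathbb{P}(\{\omega\colon f_\omega(x)=x\})=1\}$ and assume $C_\varphi\neq\emptyset$. Assume moreover that for each set $U$ in some countable basis of the topology of $M$, the set $\{\omega\colon f_\omega(x)\ne x\text{ for all }x\in U\}$ is measurable. Then every $\varphi$-invariant measure $\mu$ satisfies $\mu(\Omega\times C_\varphi)=1$.
   Context: A continuous map $f\colon M\to M$ is a paracontraction if for every fixed point $x$ of $f$ and every $y$ not fixed by $f$, $d(f(y),x)<d(y,x)$. The skew product induced by $\varphi$ is $F(\omega,x)=(\theta(\omega),f_\omega(x))$. A random measure is a probability measure on $\Omega\times M$ with first marginal $\mathbb{P}$; a $\varphi$-invariant measure is a random measure invariant under $F$. An ergodic measure-preserving dynamical system is a probability space with a measurable measure-preserving map $\theta$ such that every measurable $A$ with $\theta^{-1}(A)\subset A$ has measure $0$ or $1$. *)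

theory Defs
  imports "HOL-Probability.Probability"
begin

definition paracontraction :: "('b::metric_space \<Rightarrow> 'b) \<Rightarrow> bool" where
  "paracontraction f \<longleftrightarrow> continuous_on UNIV f \<and>
     (\<forall>x y. f x = x \<longrightarrow> f y \<noteq> y \<longrightarrow> dist (f y) x < dist y x)"

definition ergodic_mpds :: "'a measure \<Rightarrow> ('a \<Rightarrow> 'a) \<Rightarrow> bool" where
  "ergodic_mpds P \<theta> \<longleftrightarrow> prob_space P \<and> \<theta> \<in> measurable P P \<and> distr P P \<theta> = P \<and>
     (\<forall>A \<in> sets P. \<theta> -` A \<inter> space P \<subseteq> A \<longrightarrow> measure P A = 0 \<or> measure P A = 1)"

definition skew_product :: "('a \<Rightarrow> 'a) \<Rightarrow> ('a \<Rightarrow> 'b \<Rightarrow> 'b) \<Rightarrow> 'a \<times> 'b \<Rightarrow> 'a \<times> 'b" where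
  "skew_product \<theta> f = (\<lambda>(\<omega>, x). (\<theta> \<omega>, f \<omega> x))"

definition random_measure :: "'a measure \<Rightarrow> ('a \<times> 'b::topological_space) measure \<Rightarrow> bool" where
  "random_measure P \<mu> \<longleftrightarrow> prob_space \<mu> \<and> sets \<mu> = sets (P \<Otimes>\<^sub>M borel) \<and> distr \<mu> P fst = P"

definition invariant_measure ::
  "'a measure \<Rightarrow> ('a \<Rightarrow> 'a) \<Rightarrow> ('a \<Rightarrow> 'b::topological_space \<Rightarrow> 'b) \<Rightarrow> ('a \<times> 'b) measure \<Rightarrow> bool" where
  "invariant_measure P \<theta> f \<mu> \<longleftrightarrow> random_measure P \<mu> \<and>
     distr \<mu> (P \<Otimes>\<^sub>M borel) (skew_product \<theta> f) = \<mu>"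

definition C_phi :: "'a measure \<Rightarrow> ('a \<Rightarrow> 'b \<Rightarrow> 'b) \<Rightarrow> 'b set" where
  "C_phi P f = {x. measure P {\<omega> \<in> space P. f \<omega> x = x} = 1}"

end

theory Submission
  imports Defs
begin

lemma skew_eq: "skew_product \<theta> f z = (\<theta> (fst z), f (fst z) (snd z))"
  by (cases z) (simp add: skew_product_def)

lemma funpow_meas: "\<theta> \<in> measurable M M \<Longrightarrow> (\<theta> ^^ n) \<in> measurable M M"
  by (induction n) (auto intro: measurable_comp)

lemma eq_set_meas:
  fixes u v :: "'m \<Rightarrow> 'b::metric_space" and B :: "'b set set"
  assumes cB: "countable B" and tB: "topological_basis B"
    and u: "u \<in> borel_measurable M" and v: "v \<in> borel_measurable M"
  shows "{x \<in> space M. u x = v x} \<in> sets M"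
proof -
  let ?I = "{(U,V). U \<in> B \<and> V \<in> B \<and> U \<inter> V = {}}"
  have cI: "countable ?I"
    by (rule countable_subset[of _ "B \<times> B"]) (use cB in auto)
  have oB: "\<And>U. U \<in> B \<Longrightarrow> open U" using tB by (rule topological_basis_open)
  have eq: "{x \<in> space M. u x \<noteq> v x} = (\<Union>(U,V)\<in>?I. u -` U \<inter> v -` V \<inter> space M)"
  proof (intro equalityI subsetI)
    fix x assume x: "x \<in> {x \<in> space M. u x \<noteq> v x}"
    then obtain S T where ST: "open S" "open T" "u x \<in> S" "v x \<in> T" "S \<inter> T = {}"
      using hausdorff[of "u x" "v x"] x by auto
    obtain U where U: "U \<in> B" "u x \<in> U" "U \<subseteq> S" using topological_basisE[OF tB ST(1,3)] by metis
    obtain V where V: "V \<in> B" "v x \<in> V" "V \<subseteq> T" using topological_basisE[OF tB ST(2,4)] by metis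
    have "(U,V) \<in> ?I" using U V ST(5) by auto
    moreover have "x \<in> u -` U \<inter> v -` V \<inter> space M" using U V x by auto
    ultimately show "x \<in> (\<Union>(U,V)\<in>?I. u -` U \<inter> v -` V \<inter> space M)" by blast
  next
    fix x assume "x \<in> (\<Union>(U,V)\<in>?I. u -` U \<inter> v -` V \<inter> space M)"
    then obtain U V where "(U,V) \<in> ?I" "x \<in> u -` U \<inter> v -` V \<inter> space M" by blast
    thus "x \<in> {x \<in> space M. u x \<noteq> v x}" by auto
  qed
  have "(\<Union>(U,V)\<in>?I. u -` U \<inter> v -` V \<inter> space M) \<in> sets M"
  proof (rule sets.countable_UN'[OF cI], safe)
    fix U V assume "U \<in> B" "V \<in> B"
    hence "u -` U \<inter> space M \<in> sets M" "v -` V \<inter> space M \<in> sets M"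
      using measurable_sets[OF u borel_open[OF oB]] measurable_sets[OF v borel_open[OF oB]] by auto
    hence "(u -` U \<inter> space M) \<inter> (v -` V \<inter> space M) \<in> sets M" by blast
    moreover have "(u -` U \<inter> space M) \<inter> (v -` V \<inter> space M) = u -` U \<inter> v -` V \<inter> space M" by blast
    ultimately show "u -` U \<inter> v -` V \<inter> space M \<in> sets M" by simp
  qed
  hence "space M - {x \<in> space M. u x \<noteq> v x} \<in> sets M" using eq by auto
  moreover have "space M - {x \<in> space M. u x \<noteq> v x} = {x \<in> space M. u x = v x}" by auto
  ultimately show ?thesis by simp
qed

theorem mainTheorem7:
  fixes P :: "'a measure" and \<theta> :: "'a \<Rightarrow> 'a" and f :: "'a \<Rightarrow> 'b::metric_space \<Rightarrow> 'b"
  assumes sep: "separable_space (euclidean :: 'b topology)"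
    and erg: "ergodic_mpds P \<theta>"
    and para: "\<forall>\<omega> \<in> space P. paracontraction (f \<omega>)"
    and meas: "(\<lambda>(\<omega>, x). f \<omega> x) \<in> borel_measurable (P \<Otimes>\<^sub>M borel)"
    and nonempty: "C_phi P f \<noteq> {}"
    and basis: "\<exists>B. countable B \<and> topological_basis B \<and>
                  (\<forall>U \<in> B. {\<omega> \<in> space P. \<forall>x \<in> U. f \<omega> x \<noteq> x} \<in> sets P)"
    and inv: "invariant_measure P \<theta> f \<mu>"
  shows "measure \<mu> (space P \<times> C_phi P f) = 1"
proof -
  obtain B where cB: "countable B" and tB: "topological_basis B"
    and AB: "\<forall>U \<in> B. {\<omega> \<in> space P. \<forall>x \<in> U. f \<omega> x \<noteq> x} \<in> sets P" using basis by blast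
  have ps: "prob_space P" and thM: "\<theta> \<in> measurable P P"
    and ergA: "\<And>A. A \<in> sets P \<Longrightarrow> \<theta> -` A \<inter> space P \<subseteq> A \<Longrightarrow> measure P A = 0 \<or> measure P A = 1"
    using erg unfolding ergodic_mpds_def by auto
  have pmu: "prob_space \<mu>" and smu: "sets \<mu> = sets (P \<Otimes>\<^sub>M borel)" and marg: "distr \<mu> P fst = P"
    and invF: "distr \<mu> (P \<Otimes>\<^sub>M borel) (skew_product \<theta> f) = \<mu>"
    using inv unfolding invariant_measure_def random_measure_def by auto
  interpret P: prob_space P by fact
  interpret mu: prob_space \<mu> by fact
  have spmu: "space \<mu> = space P \<times> UNIV"
    using sets_eq_imp_space_eq[OF smu] by (simp add: space_pair_measure)
  have mcong: "\<And>N. measurable \<mu> N = measurable (P \<Otimes>\<^sub>M borel) N"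
    by (rule measurable_cong_sets[OF smu refl])
  have ffm: "(\<lambda>z. f (fst z) (snd z)) \<in> borel_measurable (P \<Otimes>\<^sub>M borel)"
    using meas by (simp add: case_prod_beta')
  have fstm: "fst \<in> measurable \<mu> P" unfolding mcong by (rule measurable_fst)
  have Feq: "skew_product \<theta> f = (\<lambda>z. (\<theta> (fst z), f (fst z) (snd z)))"
    by (rule ext) (rule skew_eq)
  have Fm: "skew_product \<theta> f \<in> measurable \<mu> (P \<Otimes>\<^sub>M borel)"
    unfolding mcong Feq
    by (rule measurable_Pair[OF measurable_comp[OF measurable_fst thM, unfolded comp_def] ffm])
  have lift: "\<And>A. A \<in> sets P \<Longrightarrow> measure P A = 1 \<Longrightarrow> AE z in \<mu>. fst z \<in> A"
  proof -
    fix A assume A: "A \<in> sets P" "measure P A = 1"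
    have "emeasure \<mu> (fst -` A \<inter> space \<mu>) = emeasure P A"
      using emeasure_distr[OF fstm A(1)] marg by simp
    hence "measure \<mu> (fst -` A \<inter> space \<mu>) = 1" using A(2) by (simp add: measure_def)
    moreover have e: "fst -` A \<inter> space \<mu> = {z \<in> space \<mu>. fst z \<in> A}" by auto
    moreover have "fst -` A \<inter> space \<mu> \<in> sets \<mu>" using measurable_sets[OF fstm A(1)] .
    ultimately have "measure \<mu> {z \<in> space \<mu>. fst z \<in> A} = 1" "{z \<in> space \<mu>. fst z \<in> A} \<in> sets \<mu>"
      by simp_all
    then show "AE z in \<mu>. fst z \<in> A" using mu.prob_Collect_eq_1[of "\<lambda>z. fst z \<in> A"] by simp
  qed
  obtain c where c: "c \<in> C_phi P f" using nonempty by auto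
  have fsec: "\<And>y. (\<lambda>\<omega>. f \<omega> y) \<in> borel_measurable P"
  proof -
    fix y :: 'b
    have "(\<lambda>\<omega>. (\<omega>, y)) \<in> measurable P (P \<Otimes>\<^sub>M borel)" by (rule measurable_Pair2') simp
    from measurable_comp[OF this ffm] show "(\<lambda>\<omega>. f \<omega> y) \<in> borel_measurable P" by (simp add: comp_def)
  qed
  define Oc where "Oc = {\<omega> \<in> space P. f \<omega> c = c}"
  have Ocs: "Oc \<in> sets P" unfolding Oc_def
    by (rule eq_set_meas[OF cB tB fsec[of c], of "\<lambda>_. c"]) simp
  have "measure P Oc = 1" using c unfolding C_phi_def Oc_def by simp
  hence AEc: "AE z in \<mu>. fst z \<in> Oc" by (rule lift[OF Ocs])
  define g where "g = (\<lambda>x::'b. arctan (dist x c))"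
  have gm: "g \<in> borel_measurable borel" unfolding g_def
    by (rule borel_measurable_continuous_onI) (intro continuous_intros)
  have Vm: "(\<lambda>z. g (snd z)) \<in> borel_measurable \<mu>" unfolding mcong
    using measurable_comp[OF measurable_snd gm] by (simp add: comp_def)
  have Wm: "(\<lambda>z. g (f (fst z) (snd z))) \<in> borel_measurable \<mu>" unfolding mcong
    using measurable_comp[OF ffm gm] by (simp add: comp_def)
  have gb: "\<And>x. norm (g x) \<le> pi/2" unfolding g_def
    using arctan_bounded by (simp add: abs_le_iff less_imp_le)
  have Vi: "integrable \<mu> (\<lambda>z. g (snd z))"
    by (rule mu.integrable_const_bound[where B="pi/2"]) (rule AE_I2, rule gb, rule Vm)
  have Wi: "integrable \<mu> (\<lambda>z. g (f (fst z) (snd z)))"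
    by (rule mu.integrable_const_bound[where B="pi/2"]) (rule AE_I2, rule gb, rule Wm)
  have "integral\<^sup>L \<mu> (\<lambda>z. g (snd z)) = integral\<^sup>L (distr \<mu> (P \<Otimes>\<^sub>M borel) (skew_product \<theta> f)) (\<lambda>z. g (snd z))"
    using invF by simp
  also have "\<dots> = integral\<^sup>L \<mu> (\<lambda>z. g (snd (skew_product \<theta> f z)))"
    by (rule integral_distr[OF Fm]) (use measurable_comp[OF measurable_snd gm] in \<open>simp add: comp_def\<close>)
  also have "\<dots> = integral\<^sup>L \<mu> (\<lambda>z. g (f (fst z) (snd z)))" by (simp add: skew_eq)
  finally have inteq: "integral\<^sup>L \<mu> (\<lambda>z. g (snd z)) = integral\<^sup>L \<mu> (\<lambda>z. g (f (fst z) (snd z)))" .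
  have key: "g (f (fst z) (snd z)) < g (snd z)" if "fst z \<in> Oc" "f (fst z) (snd z) \<noteq> snd z" for z
  proof -
    have "fst z \<in> space P" "f (fst z) c = c" using that(1) unfolding Oc_def by auto
    hence "dist (f (fst z) (snd z)) c < dist (snd z) c"
      using para that(2) unfolding paracontraction_def by blast
    thus ?thesis unfolding g_def by (simp add: arctan_less_iff)
  qed
  have key2: "g (f (fst z) (snd z)) \<le> g (snd z)" if "fst z \<in> Oc" for z
    using key[OF that] by (cases "f (fst z) (snd z) = snd z") auto
  have Di: "integrable \<mu> (\<lambda>z. g (snd z) - g (f (fst z) (snd z)))" using Vi Wi by simp
  have nn: "AE z in \<mu>. 0 \<le> g (snd z) - g (f (fst z) (snd z))"
    using AEc by eventually_elim (use key2 in simp)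
  have "integral\<^sup>L \<mu> (\<lambda>z. g (snd z) - g (f (fst z) (snd z))) = 0" using inteq Vi Wi by simp
  hence AE0: "AE z in \<mu>. g (snd z) - g (f (fst z) (snd z)) = 0"
    using integral_nonneg_eq_0_iff_AE[OF Di nn] by simp
  have AEfix: "AE z in \<mu>. f (fst z) (snd z) = snd z"
    using AE0 AEc
  proof eventually_elim
    case (elim z)
    show ?case
    proof (rule ccontr)
      assume "f (fst z) (snd z) \<noteq> snd z"
      from key[OF elim(2) this] elim(1) show False by simp
    qed
  qed
  define Q where "Q n z \<longleftrightarrow> f ((\<theta> ^^ n) (fst z)) (snd z) = snd z" for n z
  have Qm: "{z \<in> space (P \<Otimes>\<^sub>M borel). Q n z} \<in> sets (P \<Otimes>\<^sub>M borel)" for n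
  proof -
    have "(\<lambda>z. ((\<theta>^^n) (fst z), snd z)) \<in> measurable (P \<Otimes>\<^sub>M borel) (P \<Otimes>\<^sub>M borel)"
      by (rule measurable_Pair)
        (use measurable_comp[OF measurable_fst funpow_meas[OF thM]] in \<open>simp_all add: comp_def\<close>)
    from measurable_comp[OF this ffm]
    have "(\<lambda>z. f ((\<theta>^^n) (fst z)) (snd z)) \<in> borel_measurable (P \<Otimes>\<^sub>M borel)" by (simp add: comp_def)
    then show ?thesis unfolding Q_def by (rule eq_set_meas[OF cB tB _ measurable_snd])
  qed
  have AEQ: "AE z in \<mu>. Q n z" for n
  proof (induction n)
    case 0 show ?case using AEfix unfolding Q_def by simp
  next
    case (Suc n)
    have "AE z in distr \<mu> (P \<Otimes>\<^sub>M borel) (skew_product \<theta> f). Q n z" unfolding invF by (rule Suc)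
    hence "AE z in \<mu>. Q n (skew_product \<theta> f z)" by (subst (asm) AE_distr_iff[OF Fm Qm])
    then show ?case using AEfix by eventually_elim (simp add: Q_def skew_eq funpow_swap1)
  qed
  have AEall: "AE z in \<mu>. \<forall>n. Q n z" by (simp add: AE_all_countable AEQ)
  define A where "A U = {\<omega> \<in> space P. \<forall>x \<in> U. f \<omega> x \<noteq> x}" for U
  define K where "K = {U \<in> B. measure P (A U) > 0}"
  define Cu where "Cu U = {\<omega> \<in> space P. \<exists>n. (\<theta> ^^ n) \<omega> \<in> A U}" for U
  have AEK: "AE z in \<mu>. \<forall>U \<in> K. fst z \<in> Cu U"
  proof (rule AE_ball_countable')
    show "countable K" using cB unfolding K_def by (rule countable_subset[rotated]) auto
  next
    fix U assume U: "U \<in> K"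
    have As: "A U \<in> sets P" using AB U unfolding K_def A_def by auto
    have Cs: "Cu U \<in> sets P"
    proof -
      have "Cu U = (\<Union>n. (\<theta>^^n) -` A U \<inter> space P)" unfolding Cu_def by auto
      also have "\<dots> \<in> sets P"
        by (rule sets.countable_nat_UN) (use measurable_sets[OF funpow_meas[OF thM] As] in auto)
      finally show ?thesis .
    qed
    have "\<theta> -` Cu U \<inter> space P \<subseteq> Cu U"
    proof
      fix \<omega> assume "\<omega> \<in> \<theta> -` Cu U \<inter> space P"
      then obtain n where "(\<theta>^^n) (\<theta> \<omega>) \<in> A U" "\<omega> \<in> space P" unfolding Cu_def by auto
      hence "(\<theta>^^Suc n) \<omega> \<in> A U" by (simp add: funpow_swap1)
      thus "\<omega> \<in> Cu U" using \<open>\<omega> \<in> space P\<close> unfolding Cu_def by blast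
    qed
    from ergA[OF Cs this] have m01: "measure P (Cu U) = 0 \<or> measure P (Cu U) = 1" .
    have "A U \<subseteq> Cu U"
    proof
      fix \<omega> assume "\<omega> \<in> A U"
      then have "\<omega> \<in> space P" "(\<theta>^^0) \<omega> \<in> A U" by (auto simp: A_def)
      then show "\<omega> \<in> Cu U" unfolding Cu_def by blast
    qed
    hence "measure P (A U) \<le> measure P (Cu U)" by (rule P.finite_measure_mono[OF _ Cs])
    with m01 U have "measure P (Cu U) = 1" unfolding K_def by auto
    from lift[OF Cs this] show "AE z in \<mu>. fst z \<in> Cu U" .
  qed
  have AEfin: "AE z in \<mu>. snd z \<in> C_phi P f"
    using AEall AEK
  proof eventually_elim
    case (elim z)
    define x where "x = snd z"
    define E where "E = {\<omega> \<in> space P. f \<omega> x = x}"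
    have Es: "E \<in> sets P" unfolding E_def
      by (rule eq_set_meas[OF cB tB fsec[of x], of "\<lambda>_. x"]) simp
    show ?case
    proof (rule ccontr)
      assume nC: "snd z \<notin> C_phi P f"
      have "\<exists>U \<in> K. x \<in> U"
      proof (rule ccontr)
        assume no: "\<not> (\<exists>U \<in> K. x \<in> U)"
        let ?J = "{U \<in> B. x \<in> U}"
        have sub: "space P - E \<subseteq> (\<Union>U\<in>?J. A U)"
        proof
          fix \<omega> assume \<omega>: "\<omega> \<in> space P - E"
          hence ne: "f \<omega> x \<noteq> x" and sp: "\<omega> \<in> space P" unfolding E_def by auto
          have cont: "continuous_on UNIV (f \<omega>)" using para sp unfolding paracontraction_def by auto
          have op: "open {y. f \<omega> y \<noteq> y}"
            using open_Collect_neq[OF cont continuous_on_id] by simp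
          have "x \<in> {y. f \<omega> y \<noteq> y}" using ne by simp
          then obtain U where U: "U \<in> B" "x \<in> U" "U \<subseteq> {y. f \<omega> y \<noteq> y}"
            using topological_basisE[OF tB op] by blast
          hence "\<omega> \<in> A U" using sp unfolding A_def by auto
          thus "\<omega> \<in> (\<Union>U\<in>?J. A U)" using U by blast
        qed
        have "(\<Union>U\<in>?J. A U) \<in> null_sets P"
        proof (rule null_sets_UN')
          show "countable ?J" using cB by auto
        next
          fix U assume U: "U \<in> ?J"
          have As: "A U \<in> sets P" using AB U unfolding A_def by auto
          have "\<not> measure P (A U) > 0" using no U unfolding K_def by auto
          hence "measure P (A U) = 0" using measure_nonneg[of P "A U"] by linarith
          thus "A U \<in> null_sets P" using As by (simp add: null_sets_def P.emeasure_eq_measure)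
        qed
        hence "space P - E \<in> null_sets P" using sub Es by (blast intro: null_sets_subset)
        hence "measure P (space P - E) = 0" by (simp add: null_sets_def P.emeasure_eq_measure)
        hence "measure P E = 1" using P.prob_compl[OF Es] by simp
        thus False using nC unfolding C_phi_def E_def x_def by simp
      qed
      then obtain U where U: "U \<in> K" "x \<in> U" by blast
      with elim(2) have "fst z \<in> Cu U" by blast
      then obtain n where "(\<theta>^^n) (fst z) \<in> A U" unfolding Cu_def by blast
      hence "f ((\<theta>^^n) (fst z)) x \<noteq> x" using U(2) unfolding A_def by blast
      with elim(1) show False unfolding Q_def x_def by blast
    qed
  qed
  define G' where "G' = {z \<in> space (borel \<Otimes>\<^sub>M P). f (snd z) (fst z) = fst z}"
  have G's: "G' \<in> sets (borel \<Otimes>\<^sub>M P)" unfolding G'_def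
  proof (rule eq_set_meas[OF cB tB _ measurable_fst])
    have "(\<lambda>z. (snd z, fst z)) \<in> measurable (borel \<Otimes>\<^sub>M P) (P \<Otimes>\<^sub>M borel)"
      by (rule measurable_Pair[OF measurable_snd measurable_fst])
    from measurable_comp[OF this ffm]
    show "(\<lambda>z. f (snd z) (fst z)) \<in> borel_measurable (borel \<Otimes>\<^sub>M P)" by (simp add: comp_def)
  qed
  have hm: "(\<lambda>x. emeasure P (Pair x -` G')) \<in> borel_measurable borel"
    by (rule P.measurable_emeasure_Pair[OF G's])
  have sec: "\<And>x. Pair x -` G' = {\<omega> \<in> space P. f \<omega> x = x}"
    by (auto simp: G'_def space_pair_measure)
  have "C_phi P f = (\<lambda>x. emeasure P (Pair x -` G')) -` {1} \<inter> space borel"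
    unfolding C_phi_def sec by (auto simp: P.emeasure_eq_measure)
  also have "\<dots> \<in> sets borel" by (rule measurable_sets[OF hm]) simp
  finally have Cb: "C_phi P f \<in> sets borel" .
  have eqs: "space P \<times> C_phi P f = {z \<in> space \<mu>. snd z \<in> C_phi P f}" using spmu by auto
  have "space P \<times> C_phi P f \<in> sets \<mu>" unfolding smu using Cb by (intro pair_measureI) auto
  thus ?thesis unfolding eqs using mu.prob_Collect_eq_1[of "\<lambda>z. snd z \<in> C_phi P f"] AEfin by simp
qed

end
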